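(* Let $(x,y)\in\mathbb R^d\times\{-1,+1\}$ be distributed so that the coordinates $x_1,\dots,x_d$ are mutually independent conditionally on $y$, and for each $i$ there are constants $\mu_i,\sigma_i\ge 0$ with $\mathbb E[x_i\mid y]=y\mu_i$ and $\operatorname{Var}(x_i\mid y)=\sigma_i^2$ for both $y\in\{-1,1\}$. Let $\mu=(\mu_1,\dots,\mu_d)\neq 0$, $\bar\sigma_\mu^2=\frac{\sum_{i=1}^d\mu_i^2\sigma_i^2}{\sum_{i=1}^d\mu_i^2}$, let $\lambda>0$, and let $w^*$ be a minimizer of $\mathcal L(w)=\mathbb E[\max(0,1-yw^\top x)]+\frac{\lambda}{2}\|w\|_2^2$. Then $$\|w^*\|_2\ge \frac{1}{\|\mu\|_2}\left(1-\frac12\left(\frac{\bar\sigma_\mu}{\|\mu\|_2}+\frac{\lambda}{2\|\mu\|_2^2}\right)\right).$$ *)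

theory Defs
  imports "HOL-Probability.Probability"
begin

definition hinge_risk ::
  "'a measure \<Rightarrow> ('a \<Rightarrow> real ^ 'd) \<Rightarrow> ('a \<Rightarrow> real) \<Rightarrow> real \<Rightarrow> real ^ 'd \<Rightarrow> real" where
  "hinge_risk M X Y lam w =
     (\<integral>\<omega>. max 0 (1 - Y \<omega> * (w \<bullet> X \<omega>)) \<partial>M) + lam / 2 * (norm w)^2"

definition sigma_bar :: "real ^ 'd \<Rightarrow> ('d \<Rightarrow> real) \<Rightarrow> real" where
  "sigma_bar \<mu> \<sigma> = sqrt ((\<Sum>i\<in>UNIV. (\<mu> $ i)^2 * (\<sigma> i)^2) / (\<Sum>i\<in>UNIV. (\<mu> $ i)^2))"

end

theory Submission
  imports Defs
begin


lemma alg_final: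
  fixes A L s :: real
  assumes "L > 0" "s \<ge> 0" "(1 - A) * (1 - L * A) \<le> s"
  shows "A \<ge> 1 - s - L / 4"
proof (rule ccontr)
  assume "\<not> ?thesis"
  then have lt: "A < 1 - s - L/4" by simp
  define T where "T = 1 - s - L/4"
  have e1: "(1 - A) * (1 - L * A) - (1 - T) * (1 - L * T) = (T - A) * ((1 + L) - L * (A + T))"
    by (simp add: algebra_simps)
  have "L * (A + T) < 2 * L * T" using lt assms(1) T_def by (simp add: algebra_simps)
  moreover have "2 * L * T \<le> 1 + L"
  proof -
    have "2 * L * T \<le> 2 * L * (1 - L/4)" using assms T_def by (simp add: mult_left_mono)
    moreover have "2 * L * (1 - L/4) \<le> 1 + L"
    proof -
      have "1 + L - 2 * L * (1 - L/4) = ((L - 1)^2 + 1)/2" by (simp add: algebra_simps power2_eq_square)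
      moreover have "((L - 1)^2 + 1)/2 \<ge> 0" by simp
      ultimately show ?thesis by linarith
    qed
    ultimately show ?thesis by linarith
  qed
  ultimately have "(T - A) * ((1 + L) - L * (A + T)) > 0" using lt T_def by (intro mult_pos_pos) auto
  moreover have "(1 - T) * (1 - L * T) - s = L * (s - (1 - L/2)/2)^2"
    unfolding T_def by (simp add: field_simps power2_eq_square)
  moreover have "L * (s - (1 - L/2)/2)^2 \<ge> 0" using assms by simp
  ultimately show False using e1 assms(3) by linarith
qed



lemma unif_density:
  assumes "prob_space M" "measure M A > 0"
  shows "uniform_measure M A = density M (\<lambda>x. ennreal (indicator A x / measure M A))"
proof -
  interpret prob_space M by fact
  show ?thesis unfolding uniform_measure_def
    apply (rule arg_cong[where f="density M"])
    apply (rule ext)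
    using assms(2) by (simp add: emeasure_eq_measure divide_ennreal ennreal_indicator[symmetric])
qed

lemma unif_integrable:
  fixes f :: "'a \<Rightarrow> real"
  assumes "prob_space M" "A \<in> sets M" "measure M A > 0" "f \<in> borel_measurable M"
  shows "integrable (uniform_measure M A) f \<longleftrightarrow> integrable M (\<lambda>x. indicator A x * f x)"
proof -
  have "integrable (uniform_measure M A) f \<longleftrightarrow> integrable M (\<lambda>x. (indicator A x / measure M A) *\<^sub>R f x)"
    unfolding unif_density[OF assms(1,3)]
    using integrable_density[of f M "\<lambda>x. indicator A x / measure M A"] assms by auto
  also have "\<dots> \<longleftrightarrow> integrable M (\<lambda>x. (1 / measure M A) * (indicator A x * f x))"
    by (intro arg_cong[where f="integrable M"] ext) simp
  also have "\<dots> \<longleftrightarrow> integrable M (\<lambda>x. indicator A x * f x)"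
    using assms(3) by (subst integrable_mult_left_iff) simp
  finally show ?thesis .
qed

lemma unif_integral:
  fixes f :: "'a \<Rightarrow> real"
  assumes "prob_space M" "A \<in> sets M" "measure M A > 0" "f \<in> borel_measurable M"
  shows "integral\<^sup>L (uniform_measure M A) f = (\<integral>x. indicator A x * f x \<partial>M) / measure M A"
proof -
  have "integral\<^sup>L (uniform_measure M A) f = (\<integral>x. (indicator A x / measure M A) *\<^sub>R f x \<partial>M)"
    unfolding unif_density[OF assms(1,3)]
    using integral_density[of f M "\<lambda>x. indicator A x / measure M A"] assms by auto
  also have "\<dots> = (\<integral>x. (1 / measure M A) * (indicator A x * f x) \<partial>M)"
    by (intro Bochner_Integration.integral_cong) auto
  also have "\<dots> = (\<integral>x. indicator A x * f x \<partial>M) / measure M A"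
    by simp
  finally show ?thesis .
qed



lemma part_int:
  fixes f :: "'a \<Rightarrow> real"
  assumes P: "prob_space M" and A: "A \<in> sets M" and f: "f \<in> borel_measurable M"
    and I: "measure M A > 0 \<longrightarrow> integrable (uniform_measure M A) f"
  shows "integrable M (\<lambda>x. indicator A x * f x) \<and>
         (\<integral>x. indicator A x * f x \<partial>M) = measure M A * integral\<^sup>L (uniform_measure M A) f"
proof (cases "measure M A > 0")
  case True
  then show ?thesis using unif_integrable[OF P A True f] unif_integral[OF P A True f] I by simp
next
  case False
  interpret prob_space M by fact
  have m0: "measure M A = 0" using False measure_nonneg[of M A] by linarith
  have "A \<in> null_sets M" using A m0 by (simp add: null_sets_def emeasure_eq_measure)
  then have ae: "AE x in M. x \<notin> A" by (rule AE_not_in)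
  have ae2: "AE x in M. indicator A x * f x = (0::real)" using ae by eventually_elim simp
  have "integrable M (\<lambda>x. indicator A x * f x)"
    using integrable_cong_AE[of "\<lambda>x. indicator A x * f x" M "\<lambda>x. 0"] ae2 f A by simp
  moreover have "(\<integral>x. indicator A x * f x \<partial>M) = 0"
    using integral_cong_AE[of "\<lambda>x. indicator A x * f x" M "\<lambda>x. 0"] ae2 f A by simp
  ultimately show ?thesis using m0 by simp
qed

lemma decomp:
  fixes f :: "'a \<Rightarrow> real" and Y :: "'a \<Rightarrow> real"
  assumes P: "prob_space M" and Ym: "Y \<in> borel_measurable M" and Yv: "\<forall>\<omega>\<in>space M. Y \<omega> \<in> {-1, 1}"
    and f: "f \<in> borel_measurable M"
    and I: "\<And>c. c \<in> {-1,1} \<Longrightarrow> measure M {\<omega>\<in>space M. Y \<omega> = c} > 0 \<Longrightarrow>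
               integrable (uniform_measure M {\<omega>\<in>space M. Y \<omega> = c}) f"
  shows "integrable M f"
    and "integral\<^sup>L M f = measure M {\<omega>\<in>space M. Y \<omega> = 1} * integral\<^sup>L (uniform_measure M {\<omega>\<in>space M. Y \<omega> = 1}) f
            + measure M {\<omega>\<in>space M. Y \<omega> = -1} * integral\<^sup>L (uniform_measure M {\<omega>\<in>space M. Y \<omega> = -1}) f"
proof -
  define S1 where "S1 = {\<omega>\<in>space M. Y \<omega> = 1}"
  define S2 where "S2 = {\<omega>\<in>space M. Y \<omega> = -1}"
  have S1s: "S1 \<in> sets M" unfolding S1_def using Ym by measurable
  have S2s: "S2 \<in> sets M" unfolding S2_def using Ym by measurable
  note p1 = part_int[OF P S1s f] and p2 = part_int[OF P S2s f]
  have h1: "integrable M (\<lambda>x. indicator S1 x * f x) \<and>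
         (\<integral>x. indicator S1 x * f x \<partial>M) = measure M S1 * integral\<^sup>L (uniform_measure M S1) f"
    using p1 I[of 1] unfolding S1_def by auto
  have h2: "integrable M (\<lambda>x. indicator S2 x * f x) \<and>
         (\<integral>x. indicator S2 x * f x \<partial>M) = measure M S2 * integral\<^sup>L (uniform_measure M S2) f"
    using p2 I[of "-1"] unfolding S2_def by auto
  have eq: "\<And>x. x \<in> space M \<Longrightarrow> f x = indicator S1 x * f x + indicator S2 x * f x"
    using Yv unfolding S1_def S2_def by (auto simp: indicator_def)
  have "integrable M (\<lambda>x. indicator S1 x * f x + indicator S2 x * f x)"
    using h1 h2 by auto
  moreover have "integrable M (\<lambda>x. f x) \<longleftrightarrow> integrable M (\<lambda>x. indicator S1 x * f x + indicator S2 x * f x)"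
    by (rule Bochner_Integration.integrable_cong) (auto simp: eq[symmetric])
  ultimately show "integrable M f" by simp
  have "integral\<^sup>L M f = (\<integral>x. indicator S1 x * f x + indicator S2 x * f x \<partial>M)"
    by (rule Bochner_Integration.integral_cong) (auto simp: eq[symmetric])
  also have "\<dots> = (\<integral>x. indicator S1 x * f x \<partial>M) + (\<integral>x. indicator S2 x * f x \<partial>M)"
    using h1 h2 by (intro Bochner_Integration.integral_add) auto
  finally show "integral\<^sup>L M f = measure M {\<omega>\<in>space M. Y \<omega> = 1} * integral\<^sup>L (uniform_measure M {\<omega>\<in>space M. Y \<omega> = 1}) f
            + measure M {\<omega>\<in>space M. Y \<omega> = -1} * integral\<^sup>L (uniform_measure M {\<omega>\<in>space M. Y \<omega> = -1}) f"
    using h1 h2 unfolding S1_def S2_def by simp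
qed

lemma py_sum:
  fixes Y :: "'a \<Rightarrow> real"
  assumes P: "prob_space M" and Ym: "Y \<in> borel_measurable M" and Yv: "\<forall>\<omega>\<in>space M. Y \<omega> \<in> {-1, 1}"
  shows "measure M {\<omega>\<in>space M. Y \<omega> = 1} + measure M {\<omega>\<in>space M. Y \<omega> = -1} = 1"
proof -
  interpret prob_space M by fact
  have "measure M ({\<omega>\<in>space M. Y \<omega> = 1} \<union> {\<omega>\<in>space M. Y \<omega> = -1}) = measure M {\<omega>\<in>space M. Y \<omega> = 1} + measure M {\<omega>\<in>space M. Y \<omega> = -1}"
    by (rule finite_measure_Union) (use Ym in \<open>auto\<close>)
  moreover have "{\<omega>\<in>space M. Y \<omega> = 1} \<union> {\<omega>\<in>space M. Y \<omega> = -1} = space M" using Yv by auto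
  ultimately show ?thesis using prob_space by simp
qed



lemma class_var:
  fixes N :: "'a measure" and X :: "'a \<Rightarrow> real^'d" and m :: "real^'d" and s :: "'d \<Rightarrow> real" and w :: "real^'d"
  assumes P: "prob_space N"
    and ind: "prob_space.indep_vars N (\<lambda>_. borel) (\<lambda>i \<omega>. X \<omega> $ i) UNIV"
    and sq: "\<And>i. integrable N (\<lambda>\<omega>. (X \<omega> $ i)^2)"
    and mean: "\<And>i. (\<integral>\<omega>. X \<omega> $ i \<partial>N) = m $ i"
    and var: "\<And>i. (\<integral>\<omega>. (X \<omega> $ i - m $ i)^2 \<partial>N) = (s i)^2"
  shows "\<And>i. integrable N (\<lambda>\<omega>. X \<omega> $ i)"
    and "integrable N (\<lambda>\<omega>. (X \<omega> \<bullet> w - m \<bullet> w)^2)"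
    and "(\<integral>\<omega>. (X \<omega> \<bullet> w - m \<bullet> w)^2 \<partial>N) = (\<Sum>i\<in>UNIV. (w$i)^2 * (s i)^2)"
proof -
  interpret prob_space N by fact
  have meas: "\<And>i. (\<lambda>\<omega>. X \<omega> $ i) \<in> borel_measurable N"
    using ind unfolding indep_vars_def by auto
  show intX: "\<And>i. integrable N (\<lambda>\<omega>. X \<omega> $ i)"
    using square_integrable_imp_integrable[OF meas sq] by simp
  define D where "D i \<omega> = X \<omega> $ i - m $ i" for i \<omega>
  have intD: "integrable N (D i)" for i unfolding D_def using intX by auto
  have intD2: "integrable N (\<lambda>\<omega>. D i \<omega> * D i \<omega>)" for i
  proof -
    have "(\<lambda>\<omega>. D i \<omega> * D i \<omega>) = (\<lambda>\<omega>. (X \<omega> $ i)^2 - 2 * m $ i * X \<omega> $ i + (m $ i)^2)"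
      unfolding D_def by (auto simp: power2_eq_square algebra_simps)
    then show ?thesis using sq intX by simp
  qed
  have ED: "(\<integral>\<omega>. D i \<omega> \<partial>N) = 0" for i
    unfolding D_def using intX mean by (simp add: prob_space)
  have indD: "indep_vars (\<lambda>_. borel) D UNIV"
    unfolding D_def by (rule indep_vars_compose2[OF ind]) auto
  have cross: "integrable N (\<lambda>\<omega>. D i \<omega> * D j \<omega>) \<and> (\<integral>\<omega>. D i \<omega> * D j \<omega> \<partial>N) = 0" if "i \<noteq> j" for i j
  proof -
    have ind2: "indep_vars (\<lambda>_. borel) D {i, j}" using indep_vars_subset[OF indD] by auto
    have pe: "(\<lambda>\<omega>. \<Prod>k\<in>{i,j}. D k \<omega>) = (\<lambda>\<omega>. D i \<omega> * D j \<omega>)" using that by auto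
    have "integrable N (\<lambda>\<omega>. \<Prod>k\<in>{i,j}. D k \<omega>)"
      by (rule indep_vars_integrable) (use ind2 intD in auto)
    moreover have "(\<integral>\<omega>. (\<Prod>k\<in>{i,j}. D k \<omega>) \<partial>N) = (\<Prod>k\<in>{i,j}. \<integral>\<omega>. D k \<omega> \<partial>N)"
      by (rule indep_vars_lebesgue_integral) (use ind2 intD in auto)
    ultimately show ?thesis using pe ED that by simp
  qed
  define T where "T i j \<omega> = w $ i * w $ j * (D i \<omega> * D j \<omega>)" for i j \<omega>
  have intT: "integrable N (T i j)" for i j
    unfolding T_def using cross[of i j] intD2[of i] by (cases "i = j") auto
  have ET: "(\<integral>\<omega>. T i j \<omega> \<partial>N) = (if i = j then (w$i)^2 * (s i)^2 else 0)" for i j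
  proof (cases "i = j")
    case True
    have "(\<integral>\<omega>. D i \<omega> * D i \<omega> \<partial>N) = (s i)^2"
      using var[of i] unfolding D_def by (simp add: power2_eq_square)
    then show ?thesis unfolding T_def using True by (simp add: power2_eq_square)
  next
    case False
    then show ?thesis unfolding T_def using cross[OF False] by simp
  qed
  have expand: "(X \<omega> \<bullet> w - m \<bullet> w)^2 = (\<Sum>i\<in>UNIV. \<Sum>j\<in>UNIV. T i j \<omega>)" for \<omega>
  proof -
    have "X \<omega> \<bullet> w - m \<bullet> w = (\<Sum>i\<in>UNIV. w $ i * D i \<omega>)"
      unfolding inner_vec_def D_def by (simp add: sum_subtractf[symmetric] algebra_simps)
    then have "(X \<omega> \<bullet> w - m \<bullet> w)^2 = (\<Sum>i\<in>UNIV. w $ i * D i \<omega>) * (\<Sum>j\<in>UNIV. w $ j * D j \<omega>)"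
      by (simp add: power2_eq_square)
    also have "\<dots> = (\<Sum>i\<in>UNIV. \<Sum>j\<in>UNIV. T i j \<omega>)"
      unfolding sum_product T_def by (simp add: algebra_simps)
    finally show ?thesis .
  qed
  have intS: "integrable N (\<lambda>\<omega>. \<Sum>i\<in>UNIV. \<Sum>j\<in>UNIV. T i j \<omega>)" using intT by auto
  then show "integrable N (\<lambda>\<omega>. (X \<omega> \<bullet> w - m \<bullet> w)^2)" unfolding expand .
  have "(\<integral>\<omega>. (X \<omega> \<bullet> w - m \<bullet> w)^2 \<partial>N) = (\<integral>\<omega>. (\<Sum>i\<in>UNIV. \<Sum>j\<in>UNIV. T i j \<omega>) \<partial>N)"
    unfolding expand ..
  also have "\<dots> = (\<Sum>i\<in>UNIV. \<Sum>j\<in>UNIV. \<integral>\<omega>. T i j \<omega> \<partial>N)"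
    using intT by (simp add: Bochner_Integration.integral_sum)
  also have "\<dots> = (\<Sum>i\<in>UNIV. (w$i)^2 * (s i)^2)"
    unfolding ET by (simp add: sum.delta)
  finally show "(\<integral>\<omega>. (X \<omega> \<bullet> w - m \<bullet> w)^2 \<partial>N) = (\<Sum>i\<in>UNIV. (w$i)^2 * (s i)^2)" .
qed



lemma class_facts:
  fixes M :: "'a measure" and X :: "'a \<Rightarrow> real ^ 'd" and Y :: "'a \<Rightarrow> real"
    and \<mu> :: "real ^ 'd" and \<sigma> :: "'d \<Rightarrow> real" and c :: real
  assumes P: "prob_space M" and Ym: "Y \<in> borel_measurable M"
    and pos: "measure M {\<omega>\<in>space M. Y \<omega> = c} > 0"
    and cond: "let N = uniform_measure M {\<omega>\<in>space M. Y \<omega> = c} in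
          prob_space.indep_vars N (\<lambda>_. borel) (\<lambda>i \<omega>. X \<omega> $ i) UNIV
        \<and> (\<forall>i. integrable N (\<lambda>\<omega>. (X \<omega> $ i)^2)
               \<and> (\<integral>\<omega>. X \<omega> $ i \<partial>N) = c * \<mu> $ i
               \<and> (\<integral>\<omega>. (X \<omega> $ i - (\<integral>\<omega>'. X \<omega>' $ i \<partial>N))^2 \<partial>N) = (\<sigma> i)^2)"
  defines "N \<equiv> uniform_measure M {\<omega>\<in>space M. Y \<omega> = c}"
  shows "prob_space N" and "AE \<omega> in N. Y \<omega> = c"
    and "\<And>i. integrable N (\<lambda>\<omega>. X \<omega> $ i)"
    and "\<And>w. integrable N (\<lambda>\<omega>. X \<omega> \<bullet> w)"
    and "\<And>w. (\<integral>\<omega>. X \<omega> \<bullet> w \<partial>N) = (c *\<^sub>R \<mu>) \<bullet> w"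
    and "\<And>w. integrable N (\<lambda>\<omega>. (X \<omega> \<bullet> w - (c *\<^sub>R \<mu>) \<bullet> w)^2)"
    and "\<And>w. (\<integral>\<omega>. (X \<omega> \<bullet> w - (c *\<^sub>R \<mu>) \<bullet> w)^2 \<partial>N) = (\<Sum>i\<in>UNIV. (w$i)^2 * (\<sigma> i)^2)"
proof -
  interpret prob_space M by fact
  have Ss: "{\<omega>\<in>space M. Y \<omega> = c} \<in> sets M" using Ym by measurable
  show PN: "prob_space N" unfolding N_def
    by (rule prob_space_uniform_measure) (use pos in \<open>auto simp: emeasure_eq_measure\<close>)
  show "AE \<omega> in N. Y \<omega> = c" unfolding N_def
    by (rule AE_uniform_measureI[OF Ss]) auto
  have C0: "prob_space.indep_vars N (\<lambda>_. borel) (\<lambda>i \<omega>. X \<omega> $ i) UNIV"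
      "\<forall>i. integrable N (\<lambda>\<omega>. (X \<omega> $ i)^2)
               \<and> (\<integral>\<omega>. X \<omega> $ i \<partial>N) = c * \<mu> $ i
               \<and> (\<integral>\<omega>. (X \<omega> $ i - (\<integral>\<omega>'. X \<omega>' $ i \<partial>N))^2 \<partial>N) = (\<sigma> i)^2"
    using cond unfolding N_def[symmetric] Let_def by blast+
  have C: "prob_space.indep_vars N (\<lambda>_. borel) (\<lambda>i \<omega>. X \<omega> $ i) UNIV"
    "\<And>i. integrable N (\<lambda>\<omega>. (X \<omega> $ i)^2)"
    "\<And>i. (\<integral>\<omega>. X \<omega> $ i \<partial>N) = (c *\<^sub>R \<mu>) $ i"
    "\<And>i. (\<integral>\<omega>. (X \<omega> $ i - (c *\<^sub>R \<mu>) $ i)^2 \<partial>N) = (\<sigma> i)^2"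
  proof -
    show "prob_space.indep_vars N (\<lambda>_. borel) (\<lambda>i \<omega>. X \<omega> $ i) UNIV" by (rule C0(1))
    fix i
    from C0(2) have h: "integrable N (\<lambda>\<omega>. (X \<omega> $ i)^2)" "(\<integral>\<omega>. X \<omega> $ i \<partial>N) = c * \<mu> $ i"
         "(\<integral>\<omega>. (X \<omega> $ i - (\<integral>\<omega>'. X \<omega>' $ i \<partial>N))^2 \<partial>N) = (\<sigma> i)^2" by blast+
    show "integrable N (\<lambda>\<omega>. (X \<omega> $ i)^2)" by (rule h(1))
    show "(\<integral>\<omega>. X \<omega> $ i \<partial>N) = (c *\<^sub>R \<mu>) $ i" using h(2) by simp
    show "(\<integral>\<omega>. (X \<omega> $ i - (c *\<^sub>R \<mu>) $ i)^2 \<partial>N) = (\<sigma> i)^2" using h(3) unfolding h(2) by simp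
  qed
  note cv = class_var[OF PN C]
  show iX: "\<And>i. integrable N (\<lambda>\<omega>. X \<omega> $ i)" by (rule cv(1))
  show "\<And>w. integrable N (\<lambda>\<omega>. X \<omega> \<bullet> w)" unfolding inner_vec_def using iX by auto
  show "\<And>w. (\<integral>\<omega>. X \<omega> \<bullet> w \<partial>N) = (c *\<^sub>R \<mu>) \<bullet> w"
    unfolding inner_vec_def using iX C(3) by (simp add: Bochner_Integration.integral_sum)
  show "\<And>w. integrable N (\<lambda>\<omega>. (X \<omega> \<bullet> w - (c *\<^sub>R \<mu>) \<bullet> w)^2)" by (rule cv(2))
  show "\<And>w. (\<integral>\<omega>. (X \<omega> \<bullet> w - (c *\<^sub>R \<mu>) \<bullet> w)^2 \<partial>N) = (\<Sum>i\<in>UNIV. (w$i)^2 * (\<sigma> i)^2)" by (rule cv(3))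
qed



lemma max_convex:
  fixes P Q t :: real
  assumes "0 \<le> t" "t \<le> 1"
  shows "max 0 (t * P + (1 - t) * Q) \<le> t * max 0 P + (1 - t) * max 0 Q"
proof -
  have "t * P \<le> t * max 0 P" using assms by (intro mult_left_mono) auto
  moreover have "(1 - t) * Q \<le> (1 - t) * max 0 Q" using assms by (intro mult_left_mono) auto
  moreover have "0 \<le> t * max 0 P" "0 \<le> (1 - t) * max 0 Q" using assms by auto
  ultimately show ?thesis by linarith
qed

lemma norm_comb:
  fixes x y :: "'b::real_inner"
  shows "(norm (t *\<^sub>R x + (1 - t) *\<^sub>R y))^2 = t * (norm x)^2 + (1 - t) * (norm y)^2 - t * (1 - t) * (norm (x - y))^2"
  by (simp add: power2_norm_eq_inner inner_add_left inner_add_right inner_diff_left inner_diff_right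
      inner_commute algebra_simps)

theorem mainTheorem5:
  fixes M :: "'a measure" and X :: "'a \<Rightarrow> real ^ 'd" and Y :: "'a \<Rightarrow> real"
    and \<mu> :: "real ^ 'd" and \<sigma> :: "'d \<Rightarrow> real" and lam :: real and wstar :: "real ^ 'd"
  assumes "prob_space M"
    and "X \<in> borel_measurable M" and "Y \<in> borel_measurable M"
    and "\<forall>\<omega>\<in>space M. Y \<omega> \<in> {-1, 1}"
    and "\<forall>i. \<mu> $ i \<ge> 0" and "\<forall>i. \<sigma> i \<ge> 0"
    and cond: "\<forall>c\<in>{-1, 1::real}. measure M {\<omega>\<in>space M. Y \<omega> = c} > 0 \<longrightarrow>
       (let N = uniform_measure M {\<omega>\<in>space M. Y \<omega> = c} in
          prob_space.indep_vars N (\<lambda>_. borel) (\<lambda>i \<omega>. X \<omega> $ i) UNIV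
        \<and> (\<forall>i. integrable N (\<lambda>\<omega>. (X \<omega> $ i)^2)
               \<and> (\<integral>\<omega>. X \<omega> $ i \<partial>N) = c * \<mu> $ i
               \<and> (\<integral>\<omega>. (X \<omega> $ i - (\<integral>\<omega>'. X \<omega>' $ i \<partial>N))^2 \<partial>N) = (\<sigma> i)^2))"
    and "\<mu> \<noteq> 0"
    and "lam > 0"
    and "\<forall>w. hinge_risk M X Y lam wstar \<le> hinge_risk M X Y lam w"
  shows "norm wstar \<ge> 1 / norm \<mu> *
           (1 - 1/2 * (sigma_bar \<mu> \<sigma> / norm \<mu> + lam / (2 * (norm \<mu>)^2)))"
proof -
  note P = assms(1) and Xm = assms(2) and Ym = assms(3) and Yv = assms(4)
  interpret prob_space M by fact
  define Nc where "Nc c = uniform_measure M {\<omega>\<in>space M. Y \<omega> = c}" for c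
  define pc where "pc c = measure M {\<omega>\<in>space M. Y \<omega> = c}" for c
  have CF: "prob_space (Nc c) \<and> (AE \<omega> in Nc c. Y \<omega> = c)
     \<and> (\<forall>w. integrable (Nc c) (\<lambda>\<omega>. X \<omega> \<bullet> w) \<and> (\<integral>\<omega>. X \<omega> \<bullet> w \<partial>Nc c) = (c *\<^sub>R \<mu>) \<bullet> w)
     \<and> (\<forall>w. integrable (Nc c) (\<lambda>\<omega>. (X \<omega> \<bullet> w - (c *\<^sub>R \<mu>) \<bullet> w)^2)
         \<and> (\<integral>\<omega>. (X \<omega> \<bullet> w - (c *\<^sub>R \<mu>) \<bullet> w)^2 \<partial>Nc c) = (\<Sum>i\<in>UNIV. (w$i)^2 * (\<sigma> i)^2))"
    if c: "c \<in> {-1, 1}" and pos: "pc c > 0" for c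
  proof -
    have cd: "let N = uniform_measure M {\<omega>\<in>space M. Y \<omega> = c} in
          prob_space.indep_vars N (\<lambda>_. borel) (\<lambda>i \<omega>. X \<omega> $ i) UNIV
        \<and> (\<forall>i. integrable N (\<lambda>\<omega>. (X \<omega> $ i)^2)
               \<and> (\<integral>\<omega>. X \<omega> $ i \<partial>N) = c * \<mu> $ i
               \<and> (\<integral>\<omega>. (X \<omega> $ i - (\<integral>\<omega>'. X \<omega>' $ i \<partial>N))^2 \<partial>N) = (\<sigma> i)^2)"
      using cond c pos unfolding pc_def by blast
    note cf = class_facts[OF P Ym pos[unfolded pc_def] cd, folded Nc_def]
    show ?thesis using cf by blast
  qed
  have psum: "pc 1 + pc (-1) = 1" unfolding pc_def by (rule py_sum[OF P Ym Yv])
  have comb: "integrable M f \<and> integral\<^sup>L M f = K"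
    if fm: "f \<in> borel_measurable M"
      and h: "\<And>c. c \<in> {-1, 1} \<Longrightarrow> pc c > 0 \<Longrightarrow> integrable (Nc c) f \<and> integral\<^sup>L (Nc c) f = K"
    for f :: "'a \<Rightarrow> real" and K
  proof -
    note d = decomp[OF P Ym Yv fm, folded Nc_def pc_def]
    have e: "integral\<^sup>L M f = pc 1 * integral\<^sup>L (Nc 1) f + pc (- 1) * integral\<^sup>L (Nc (- 1)) f"
      by (rule d(2)) (use h in auto)
    have "integrable M f" by (rule d(1)) (use h in auto)
    moreover have "pc c * integral\<^sup>L (Nc c) f = pc c * K" if "c \<in> {-1,1}" for c
      using h[OF that] by (cases "pc c > 0") (auto simp: pc_def measure_nonneg less_le)
    ultimately show ?thesis using e psum
      by (metis (no_types, lifting) distrib_right insertCI mult_1)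
  qed
  have cpm: "c * c = 1" if "c \<in> {-1, 1::real}" for c using that by auto
  have Q1: "integrable M (\<lambda>\<omega>. Y \<omega> * (w \<bullet> X \<omega>)) \<and> (\<integral>\<omega>. Y \<omega> * (w \<bullet> X \<omega>) \<partial>M) = w \<bullet> \<mu>" for w
  proof (rule comb)
    show "(\<lambda>\<omega>. Y \<omega> * (w \<bullet> X \<omega>)) \<in> borel_measurable M" using Xm Ym by measurable
    fix c :: real assume c: "c \<in> {-1, 1}" and pos: "pc c > 0"
    note cf = CF[OF c pos]
    have ae: "AE \<omega> in Nc c. Y \<omega> * (w \<bullet> X \<omega>) = c * (X \<omega> \<bullet> w)"
      using cf by (auto elim!: AE_mp simp: inner_commute)
    have meas: "(\<lambda>\<omega>. Y \<omega> * (w \<bullet> X \<omega>)) \<in> borel_measurable (Nc c)"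
      unfolding Nc_def using Xm Ym by measurable
    have i2: "integrable (Nc c) (\<lambda>\<omega>. c * (X \<omega> \<bullet> w))" using cf by auto
    have "integrable (Nc c) (\<lambda>\<omega>. Y \<omega> * (w \<bullet> X \<omega>))"
      using integrable_cong_AE[OF meas _ ae] i2 by (metis borel_measurable_integrable)
    moreover have "(\<integral>\<omega>. Y \<omega> * (w \<bullet> X \<omega>) \<partial>Nc c) = (\<integral>\<omega>. c * (X \<omega> \<bullet> w) \<partial>Nc c)"
      using integral_cong_AE[OF meas _ ae] i2 by (metis borel_measurable_integrable)
    moreover have "(\<integral>\<omega>. c * (X \<omega> \<bullet> w) \<partial>Nc c) = w \<bullet> \<mu>"
      using cf cpm[OF c] by (simp add: inner_commute)
    ultimately show "integrable (Nc c) (\<lambda>\<omega>. Y \<omega> * (w \<bullet> X \<omega>)) \<and> (\<integral>\<omega>. Y \<omega> * (w \<bullet> X \<omega>) \<partial>Nc c) = w \<bullet> \<mu>"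
      by simp
  qed
  define m where "m = norm \<mu>"
  have mpos: "m > 0" using assms(8) unfolding m_def by simp
  define T0 where "T0 = (1 / m^2) *\<^sub>R \<mu>"
  have muT0: "\<mu> \<bullet> T0 = 1" using mpos unfolding T0_def m_def by (simp add: power2_norm_eq_inner)
  define V where "V = (\<Sum>i\<in>UNIV. (T0$i)^2 * (\<sigma> i)^2)"
  have Q2: "integrable M (\<lambda>\<omega>. (Y \<omega> * (T0 \<bullet> X \<omega>) - 1)^2) \<and> (\<integral>\<omega>. (Y \<omega> * (T0 \<bullet> X \<omega>) - 1)^2 \<partial>M) = V"
  proof (rule comb)
    show "(\<lambda>\<omega>. (Y \<omega> * (T0 \<bullet> X \<omega>) - 1)^2) \<in> borel_measurable M" using Xm Ym by measurable
    fix c :: real assume c: "c \<in> {-1, 1}" and pos: "pc c > 0"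
    note cf = CF[OF c pos]
    have pt: "(c * a - 1)^2 = (a - (c *\<^sub>R \<mu>) \<bullet> T0)^2" for a
      using c muT0 by (auto simp: power2_eq_square algebra_simps)
    have ae: "AE \<omega> in Nc c. (Y \<omega> * (T0 \<bullet> X \<omega>) - 1)^2 = (X \<omega> \<bullet> T0 - (c *\<^sub>R \<mu>) \<bullet> T0)^2"
      using cf by (auto elim!: AE_mp simp: inner_commute pt)
    have meas: "(\<lambda>\<omega>. (Y \<omega> * (T0 \<bullet> X \<omega>) - 1)^2) \<in> borel_measurable (Nc c)"
      unfolding Nc_def using Xm Ym by measurable
    have i2: "integrable (Nc c) (\<lambda>\<omega>. (X \<omega> \<bullet> T0 - (c *\<^sub>R \<mu>) \<bullet> T0)^2)" using cf by blast
    have "integrable (Nc c) (\<lambda>\<omega>. (Y \<omega> * (T0 \<bullet> X \<omega>) - 1)^2)"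
      using integrable_cong_AE[OF meas _ ae] i2 by (metis borel_measurable_integrable)
    moreover have "(\<integral>\<omega>. (Y \<omega> * (T0 \<bullet> X \<omega>) - 1)^2 \<partial>Nc c) = (\<integral>\<omega>. (X \<omega> \<bullet> T0 - (c *\<^sub>R \<mu>) \<bullet> T0)^2 \<partial>Nc c)"
      using integral_cong_AE[OF meas _ ae] i2 by (metis borel_measurable_integrable)
    moreover have "(\<integral>\<omega>. (X \<omega> \<bullet> T0 - (c *\<^sub>R \<mu>) \<bullet> T0)^2 \<partial>Nc c) = V"
      using cf unfolding V_def by blast
    ultimately show "integrable (Nc c) (\<lambda>\<omega>. (Y \<omega> * (T0 \<bullet> X \<omega>) - 1)^2) \<and> (\<integral>\<omega>. (Y \<omega> * (T0 \<bullet> X \<omega>) - 1)^2 \<partial>Nc c) = V"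
      by simp
  qed
  define H where "H w = (\<integral>\<omega>. max 0 (1 - Y \<omega> * (w \<bullet> X \<omega>)) \<partial>M)" for w
  have risk: "hinge_risk M X Y lam w = H w + lam/2 * (norm w)^2" for w by (simp add: hinge_risk_def H_def)
  have intH: "integrable M (\<lambda>\<omega>. max 0 (1 - Y \<omega> * (w \<bullet> X \<omega>)))" for w using Q1[of w] by auto
  have Hlow: "H w \<ge> 1 - w \<bullet> \<mu>" for w
  proof -
    have "(\<integral>\<omega>. 1 - Y \<omega> * (w \<bullet> X \<omega>) \<partial>M) \<le> H w" unfolding H_def
      by (rule integral_mono) (use Q1[of w] intH in auto)
    moreover have "(\<integral>\<omega>. 1 - Y \<omega> * (w \<bullet> X \<omega>) \<partial>M) = 1 - w \<bullet> \<mu>"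
      using Q1[of w] by (simp add: prob_space)
    ultimately show ?thesis by simp
  qed
  have Hconv: "H (t *\<^sub>R a + (1 - t) *\<^sub>R b) \<le> t * H a + (1 - t) * H b" if t: "0 \<le> t" "t \<le> 1" for t a b
  proof -
    have pw: "max 0 (1 - Y \<omega> * ((t *\<^sub>R a + (1 - t) *\<^sub>R b) \<bullet> X \<omega>)) \<le>
        t * max 0 (1 - Y \<omega> * (a \<bullet> X \<omega>)) + (1 - t) * max 0 (1 - Y \<omega> * (b \<bullet> X \<omega>))" for \<omega>
    proof -
      have "1 - Y \<omega> * ((t *\<^sub>R a + (1 - t) *\<^sub>R b) \<bullet> X \<omega>) = t * (1 - Y \<omega> * (a \<bullet> X \<omega>)) + (1 - t) * (1 - Y \<omega> * (b \<bullet> X \<omega>))"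
        by (simp add: inner_add_left algebra_simps)
      then show ?thesis using max_convex[OF t] by simp
    qed
    have "H (t *\<^sub>R a + (1 - t) *\<^sub>R b) \<le> (\<integral>\<omega>. t * max 0 (1 - Y \<omega> * (a \<bullet> X \<omega>)) + (1 - t) * max 0 (1 - Y \<omega> * (b \<bullet> X \<omega>)) \<partial>M)"
      unfolding H_def by (rule integral_mono) (use intH pw in auto)
    also have "\<dots> = t * H a + (1 - t) * H b" unfolding H_def using intH by simp
    finally show ?thesis .
  qed
  have Hup: "H T0 \<le> sigma_bar \<mu> \<sigma> / (2 * m)"
  proof -
    define z where "z \<omega> = Y \<omega> * (T0 \<bullet> X \<omega>)" for \<omega>
    define E where "E = (\<integral>\<omega>. \<bar>z \<omega> - 1\<bar> \<partial>M)"
    have iz: "integrable M z" unfolding z_def using Q1 by blast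
    have Ez: "(\<integral>\<omega>. z \<omega> \<partial>M) = 1" unfolding z_def using Q1[of T0] muT0 by (simp add: inner_commute)
    have ig: "integrable M (\<lambda>\<omega>. \<bar>z \<omega> - 1\<bar>)" using iz by auto
    have ig2: "integrable M (\<lambda>\<omega>. (z \<omega> - 1)^2)" and Eg2: "(\<integral>\<omega>. (z \<omega> - 1)^2 \<partial>M) = V"
      using Q2 unfolding z_def by auto
    have "H T0 = (\<integral>\<omega>. ((1 - z \<omega>) + \<bar>z \<omega> - 1\<bar>) / 2 \<partial>M)"
      unfolding H_def z_def by (intro Bochner_Integration.integral_cong) (auto simp: max_def abs_if)
    also have "\<dots> = E / 2" unfolding E_def using iz ig Ez by (simp add: prob_space)
    finally have HE: "H T0 = E / 2" .
    have "0 \<le> (\<integral>\<omega>. (\<bar>z \<omega> - 1\<bar> - E)^2 \<partial>M)" by simp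
    also have "(\<integral>\<omega>. (\<bar>z \<omega> - 1\<bar> - E)^2 \<partial>M) = (\<integral>\<omega>. (z \<omega> - 1)^2 - 2 * E * \<bar>z \<omega> - 1\<bar> + E^2 \<partial>M)"
      by (intro Bochner_Integration.integral_cong) (auto simp: power2_eq_square algebra_simps)
    also have "\<dots> = V - E^2" using ig ig2 Eg2
      by (simp add: prob_space power2_eq_square E_def)
    finally have "E^2 \<le> V" by simp
    then have "E \<le> sqrt V" by (rule real_le_rsqrt)
    moreover have "sqrt V = sigma_bar \<mu> \<sigma> / m"
    proof -
      have msq: "m^2 = (\<Sum>i\<in>UNIV. (\<mu> $ i)^2)"
        unfolding m_def power2_norm_eq_inner inner_vec_def by (simp add: power2_eq_square)
      have "V = ((\<Sum>i\<in>UNIV. (\<mu> $ i)^2 * (\<sigma> i)^2) / (\<Sum>i\<in>UNIV. (\<mu> $ i)^2)) / m^2"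
        unfolding V_def T0_def msq[symmetric] using mpos
        by (simp add: sum_divide_distrib power_divide field_simps)
      then have "sqrt V = sqrt ((\<Sum>i\<in>UNIV. (\<mu> $ i)^2 * (\<sigma> i)^2) / (\<Sum>i\<in>UNIV. (\<mu> $ i)^2)) / sqrt (m^2)"
        by (simp only: real_sqrt_divide)
      then show ?thesis unfolding sigma_bar_def using mpos by simp
    qed
    ultimately show ?thesis using HE mpos by (simp add: field_simps)
  qed
  define a where "a = norm wstar"
  define D where "D = (norm (T0 - wstar))^2"
  define LW where "LW = H wstar + lam/2 * a^2"
  define LT where "LT = H T0 + lam/2 * (norm T0)^2"
  define K where "K = lam/2 * D"
  have K0: "K \<ge> 0" unfolding K_def D_def using assms(9) by simp
  have opt: "LW \<le> H w + lam/2 * (norm w)^2" for w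
    using assms(10) unfolding LW_def a_def risk by auto
  have sc: "LW + K \<le> LT"
  proof (rule field_le_epsilon)
    fix e :: real assume e: "0 < e"
    define th where "th = min (1/2) (e / (K + 1))"
    have th0: "0 < th" "th \<le> 1/2" "th \<le> e / (K + 1)" unfolding th_def using e K0 by (auto simp: min_def)
    define w where "w = th *\<^sub>R T0 + (1 - th) *\<^sub>R wstar"
    have "LW \<le> H w + lam/2 * (norm w)^2" by (rule opt)
    also have "H w \<le> th * H T0 + (1 - th) * H wstar" unfolding w_def by (rule Hconv) (use th0 in auto)
    also have "(norm w)^2 = th * (norm T0)^2 + (1 - th) * a^2 - th * (1 - th) * D"
      unfolding w_def a_def D_def by (rule norm_comb)
    finally have h1: "LW \<le> th * H T0 + (1 - th) * H wstar + lam / 2 * (th * (norm T0)^2 + (1 - th) * a^2 - th * (1 - th) * D)"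
      by simp
    have "th * (LW + (1 - th) * K - LT) \<le> 0"
      using h1 unfolding LW_def LT_def K_def by (simp add: algebra_simps diff_divide_distrib)
    then have h2: "LW + (1 - th) * K - LT \<le> 0" using th0 by (simp add: mult_le_0_iff)
    have "th * K \<le> e / (K + 1) * K" using th0 K0 by (intro mult_right_mono) auto
    also have "e / (K + 1) * K \<le> e" using e K0 by (simp add: field_simps)
    finally have "th * K \<le> e" .
    with h2 show "LW + K \<le> LT + e" by (simp add: algebra_simps)
  qed
  define b where "b = wstar \<bullet> \<mu>"
  define sb where "sb = sigma_bar \<mu> \<sigma>"
  have sb0: "sb \<ge> 0" unfolding sb_def sigma_bar_def by (auto intro!: divide_nonneg_nonneg sum_nonneg)
  have LWlow: "LW \<ge> 1 - b + lam/2 * a^2" unfolding LW_def b_def using Hlow[of wstar] by simp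
  have nT0: "(norm T0)^2 = 1 / m^2" unfolding T0_def m_def using mpos[unfolded m_def]
    by (simp add: power2_eq_square)
  have T0w: "T0 \<bullet> wstar = b / m^2" unfolding T0_def b_def by (simp add: inner_commute)
  have Dexp: "D = 1 / m^2 - 2 * (b / m^2) + a^2"
    unfolding D_def a_def using nT0 T0w
    by (simp add: power2_norm_eq_inner inner_diff_left inner_diff_right inner_commute)
  have LTup: "LT \<le> sb / (2 * m) + lam / 2 * (1 / m^2)" unfolding LT_def sb_def nT0 using Hup by simp
  define A where "A = a * m"
  define La where "La = lam / m^2"
  define s where "s = sb / (2 * m)"
  have s0: "s \<ge> 0" unfolding s_def using sb0 mpos by simp
  have La0: "La > 0" unfolding La_def using assms(9) mpos by simp
  have key: "1 - b - La * b + lam * a^2 \<le> s"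
  proof -
    have "1 - b + lam/2 * a^2 + lam/2 * (1 / m^2 - 2 * (b / m^2) + a^2) \<le> sb / (2 * m) + lam / 2 * (1 / m^2)"
      using sc LWlow LTup unfolding K_def Dexp by linarith
    then show ?thesis unfolding La_def s_def by (simp add: algebra_simps)
  qed
  have bA: "b \<le> A" unfolding b_def A_def a_def m_def by (rule norm_cauchy_schwarz)
  have "(1 + La) * b \<le> (1 + La) * A" using bA La0 by (intro mult_left_mono) auto
  moreover have "lam * a^2 = La * A^2" unfolding La_def A_def using mpos by (simp add: power2_eq_square field_simps)
  ultimately have "(1 - A) * (1 - La * A) \<le> s" using key by (simp add: algebra_simps power2_eq_square)
  then have "A \<ge> 1 - s - La / 4" by (rule alg_final[OF La0 s0])
  then have "a * m \<ge> 1 - s - La / 4" unfolding A_def .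
  then have "a \<ge> (1 - s - La / 4) / m" using mpos by (simp add: field_simps)
  moreover have "(1 - s - La / 4) / m = 1 / norm \<mu> * (1 - 1/2 * (sigma_bar \<mu> \<sigma> / norm \<mu> + lam / (2 * (norm \<mu>)^2)))"
    unfolding s_def La_def sb_def m_def using mpos[unfolded m_def] by (simp add: field_simps)
  ultimately show ?thesis unfolding a_def by simp
qed

end
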